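(* Let $(P,\le,A_1\ldots A_k)$ be a regular poset of width $w$, let $(u,s)$ be any characteristics, and let $\mathcal{L}$ be a chain in $(\mathcal{P}(u,s),\le_{(u,s)})$. Then the edge poset $(\mathcal{L}_E,\le_E)$ has width at most $w^3$ and is $(\underline{2w-2\lceil\sqrt{w}\rceil+3}+\underline{2w-2\lceil\sqrt{w}\rceil+3})$-free.
   Context: Let $(P,\le)$ be a finite poset of width $w$. For $A\subseteq P$ let $A{\uparrow}=\{y: x\le y\text{ for some }x\in A\}$, $A{\downarrow}=\{y: y\le x\text{ for some }x\in A\}$. For maximal antichains $A,B$ write $A\sqsubseteq B$ if $A\subseteq B{\downarrow}$, and $A\sqsubset B$ if also $A\ne B$. For disjoint antichains $A\sqsubset B$, $(A,B,<)$ is the bipartite graph with classes $A,B$ and edges $(a<b)$ for $a\in A,b\in B$, $a<b$; it is regular if every edge lies in a perfect matching. A regular poset $(P,\le,A_1\ldots A_k)$: $A_1,\dots,A_k$ are maximum antichains partitioning $P$, $(\{A_1,\dots,A_k\},\sqsubseteq)$ is a linear order with minimum $A_1$ and maximum $A_2$, $a<b$ for all $a\in A_1,b\in A_2$, and for every $t\in[2,k]$ and every $A_p\sqsubset A_s$ consecutive in $(\{A_1,\dots,A_t\},\sqsubseteq)$ the graph $(A_p,A_s,<)$ is regular. A node is a bipartite graph $N=(X,Y,<)$ where, for some such consecutive pair $A_p\sqsubset A_s$ (at some stage $t$), $X\subseteq A_p$, $Y\subseteq A_s$ and $X\cup Y$ is the vertex set of a connected component of $(A_p,A_s,<)$. Its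 width is $|X|=|Y|$, $\mathrm{Int}(N)=X{\uparrow}\cap Y{\downarrow}$, and its surplus is the largest $k$ such that $|A{\uparrow}\cap Y|\ge\min\{|A|+k,|Y|\}$ for all non-empty $A\subseteq X$ ($\infty$ if $N$ is complete bipartite); its characteristics is the pair (width, surplus). Node tree: the set of all nodes, where when for $t\ge3$ the antichain $A_t$ is inserted between $A_p\sqsubset A_s$ consecutive at stage $t-1$, each node $M$ of $(A_p,A_t,<)$ or $(A_t,A_s,<)$ is a child of the unique node $N$ of $(A_p,A_s,<)$ with $\mathrm{Int}(M)\subset\mathrm{Int}(N)$; it is a rooted tree with root $(A_1,A_2,<)$. A Dilworth clique of width $m$ in a node $(X,Y,<)$ is a set $\{x_1,\dots,x_m,y_1,\dots,y_m\}$ with $x_i\in X$, $y_i\in Y$, $x_i<y_j$ for all $i,j\in[m]$, such that the edges $x_1<y_1,\dots,x_m<y_m$ extend to a perfect matching of $(X,Y,<)$. A node is active if it contains a Dilworth clique of width $\lceil\sqrt{w}\rceil$ and no proper ancestor of it has the same characteristics. For each active node $N$ fix a Dilworth clique $R(N)$ of width $\lceil\sqrt w\rceil$ in $N$. $\mathcal{P}(u,s)$ is the set of active nodes with characteristics $(u,s)$; for $N,K\in\mathcal{P}(u,s)$, $N<_{(u,s)}K$ iff some maximal element $x$ of $(R(N),\le)$ and some minimal element $y$ of $(R(K),\le)$ satisfy $x\le y$. For a set $\mathcal{F}$ of nodes, $\mathcal{F}_E$ is the set of all edges $(a<b)$ of nodes in $\mathcal{F}$, and the edge poset $(\mathcal{F}_E,\le_E)$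 is the partial order in which for distinct edges $(a<b)<_E(c<d)$ iff $b\le c$. For $m\in\mathbb{N}$, a poset is $(\underline{m}+\underline{m})$-free if it has no induced subposet isomorphic to the disjoint union of two $m$-element chains with every element of one chain incomparable to every element of the other. *)

theory Defs
  imports Complex_Main "HOL-Library.Extended_Nat"
begin

definition poset_on :: "'a set \<Rightarrow> ('a \<Rightarrow> 'a \<Rightarrow> bool) \<Rightarrow> bool" where
  "poset_on P le \<longleftrightarrow> finite P \<and> (\<forall>x\<in>P. le x x)
     \<and> (\<forall>x\<in>P. \<forall>y\<in>P. le x y \<and> le y x \<longrightarrow> x = y)
     \<and> (\<forall>x\<in>P. \<forall>y\<in>P. \<forall>z\<in>P. le x y \<and> le y z \<longrightarrow> le x z)"

definition lt_of :: "('a \<Rightarrow> 'a \<Rightarrow> bool) \<Rightarrow> 'a \<Rightarrow> 'a \<Rightarrow> bool" where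
  "lt_of le x y \<longleftrightarrow> le x y \<and> x \<noteq> y"

definition antichain_in :: "'a set \<Rightarrow> ('a \<Rightarrow> 'a \<Rightarrow> bool) \<Rightarrow> 'a set \<Rightarrow> bool" where
  "antichain_in P le B \<longleftrightarrow> B \<subseteq> P \<and> (\<forall>x\<in>B. \<forall>y\<in>B. le x y \<longrightarrow> x = y)"

definition width_of :: "'a set \<Rightarrow> ('a \<Rightarrow> 'a \<Rightarrow> bool) \<Rightarrow> nat" where
  "width_of P le = Max {card B | B. antichain_in P le B}"

definition maximum_antichain :: "'a set \<Rightarrow> ('a \<Rightarrow> 'a \<Rightarrow> bool) \<Rightarrow> 'a set \<Rightarrow> bool" where
  "maximum_antichain P le B \<longleftrightarrow> antichain_in P le B \<and> card B = width_of P le"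

definition up_set :: "'a set \<Rightarrow> ('a \<Rightarrow> 'a \<Rightarrow> bool) \<Rightarrow> 'a set \<Rightarrow> 'a set" where
  "up_set P le B = {y\<in>P. \<exists>x\<in>B. le x y}"

definition down_set :: "'a set \<Rightarrow> ('a \<Rightarrow> 'a \<Rightarrow> bool) \<Rightarrow> 'a set \<Rightarrow> 'a set" where
  "down_set P le B = {y\<in>P. \<exists>x\<in>B. le y x}"

definition sq_le :: "'a set \<Rightarrow> ('a \<Rightarrow> 'a \<Rightarrow> bool) \<Rightarrow> 'a set \<Rightarrow> 'a set \<Rightarrow> bool" where
  "sq_le P le B C \<longleftrightarrow> B \<subseteq> down_set P le C"

definition sq_lt :: "'a set \<Rightarrow> ('a \<Rightarrow> 'a \<Rightarrow> bool) \<Rightarrow> 'a set \<Rightarrow> 'a set \<Rightarrow> bool" where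
  "sq_lt P le B C \<longleftrightarrow> sq_le P le B C \<and> B \<noteq> C"

definition perfect_matching :: "('a \<Rightarrow> 'a \<Rightarrow> bool) \<Rightarrow> 'a set \<Rightarrow> 'a set \<Rightarrow> ('a \<Rightarrow> 'a) \<Rightarrow> bool" where
  "perfect_matching le X Y f \<longleftrightarrow> bij_betw f X Y \<and> (\<forall>x\<in>X. lt_of le x (f x))"

definition regular_bip :: "('a \<Rightarrow> 'a \<Rightarrow> bool) \<Rightarrow> 'a set \<Rightarrow> 'a set \<Rightarrow> bool" where
  "regular_bip le X Y \<longleftrightarrow>
     (\<forall>a\<in>X. \<forall>b\<in>Y. lt_of le a b \<longrightarrow> (\<exists>f. perfect_matching le X Y f \<and> f a = b))"

definition bip_adj :: "('a \<Rightarrow> 'a \<Rightarrow> bool) \<Rightarrow> 'a set \<Rightarrow> 'a set \<Rightarrow> 'a \<Rightarrow> 'a \<Rightarrow> bool" where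
  "bip_adj le X Y u v \<longleftrightarrow> (u \<in> X \<and> v \<in> Y \<and> lt_of le u v) \<or> (v \<in> X \<and> u \<in> Y \<and> lt_of le v u)"

definition component_of :: "('a \<Rightarrow> 'a \<Rightarrow> bool) \<Rightarrow> 'a set \<Rightarrow> 'a set \<Rightarrow> 'a set \<Rightarrow> bool" where
  "component_of le X Y C \<longleftrightarrow> (\<exists>u\<in>X \<union> Y. C = {v. (bip_adj le X Y)\<^sup>*\<^sup>* u v})"

definition consec :: "'a set \<Rightarrow> ('a \<Rightarrow> 'a \<Rightarrow> bool) \<Rightarrow> (nat \<Rightarrow> 'a set) \<Rightarrow> nat \<Rightarrow> nat \<Rightarrow> nat \<Rightarrow> bool" where
  "consec P le A t p s \<longleftrightarrow> p \<in> {1..t} \<and> s \<in> {1..t} \<and> sq_lt P le (A p) (A s)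
     \<and> \<not> (\<exists>q\<in>{1..t}. sq_lt P le (A p) (A q) \<and> sq_lt P le (A q) (A s))"

definition regular_poset :: "'a set \<Rightarrow> ('a \<Rightarrow> 'a \<Rightarrow> bool) \<Rightarrow> (nat \<Rightarrow> 'a set) \<Rightarrow> nat \<Rightarrow> bool" where
  "regular_poset P le A k \<longleftrightarrow> poset_on P le \<and> 2 \<le> k
     \<and> (\<forall>i\<in>{1..k}. maximum_antichain P le (A i))
     \<and> (\<forall>i\<in>{1..k}. A i \<noteq> {})
     \<and> (\<forall>i\<in>{1..k}. \<forall>j\<in>{1..k}. i \<noteq> j \<longrightarrow> A i \<inter> A j = {})
     \<and> (\<Union>i\<in>{1..k}. A i) = P
     \<and> (\<forall>i\<in>{1..k}. \<forall>j\<in>{1..k}. sq_le P le (A i) (A j) \<or> sq_le P le (A j) (A i))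
     \<and> (\<forall>i\<in>{1..k}. sq_le P le (A 1) (A i) \<and> sq_le P le (A i) (A 2))
     \<and> (\<forall>a\<in>A 1. \<forall>b\<in>A 2. lt_of le a b)
     \<and> (\<forall>t\<in>{2..k}. \<forall>p s. consec P le A t p s \<longrightarrow> regular_bip le (A p) (A s))"

definition node_of :: "('a \<Rightarrow> 'a \<Rightarrow> bool) \<Rightarrow> 'a set \<Rightarrow> 'a set \<Rightarrow> 'a set \<times> 'a set \<Rightarrow> bool" where
  "node_of le Ap As N \<longleftrightarrow> fst N \<subseteq> Ap \<and> snd N \<subseteq> As \<and> component_of le Ap As (fst N \<union> snd N)"

definition is_node :: "'a set \<Rightarrow> ('a \<Rightarrow> 'a \<Rightarrow> bool) \<Rightarrow> (nat \<Rightarrow> 'a set) \<Rightarrow> nat \<Rightarrow> 'a set \<times> 'a set \<Rightarrow> bool" where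
  "is_node P le A k N \<longleftrightarrow>
     (\<exists>t\<in>{2..k}. \<exists>p s. consec P le A t p s \<and> node_of le (A p) (A s) N)"

definition Int_node :: "'a set \<Rightarrow> ('a \<Rightarrow> 'a \<Rightarrow> bool) \<Rightarrow> 'a set \<times> 'a set \<Rightarrow> 'a set" where
  "Int_node P le N = up_set P le (fst N) \<inter> down_set P le (snd N)"

definition node_child :: "'a set \<Rightarrow> ('a \<Rightarrow> 'a \<Rightarrow> bool) \<Rightarrow> (nat \<Rightarrow> 'a set) \<Rightarrow> nat
     \<Rightarrow> 'a set \<times> 'a set \<Rightarrow> 'a set \<times> 'a set \<Rightarrow> bool" where
  "node_child P le A k M N \<longleftrightarrow>
     (\<exists>t\<in>{3..k}. \<exists>p s. consec P le A (t - 1) p s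
        \<and> sq_lt P le (A p) (A t) \<and> sq_lt P le (A t) (A s)
        \<and> (node_of le (A p) (A t) M \<or> node_of le (A t) (A s) M)
        \<and> node_of le (A p) (A s) N
        \<and> Int_node P le M \<subset> Int_node P le N)"

definition proper_ancestor :: "'a set \<Rightarrow> ('a \<Rightarrow> 'a \<Rightarrow> bool) \<Rightarrow> (nat \<Rightarrow> 'a set) \<Rightarrow> nat
     \<Rightarrow> 'a set \<times> 'a set \<Rightarrow> 'a set \<times> 'a set \<Rightarrow> bool" where
  "proper_ancestor P le A k K N \<longleftrightarrow> (node_child P le A k)\<^sup>+\<^sup>+ N K"

definition surplus :: "('a \<Rightarrow> 'a \<Rightarrow> bool) \<Rightarrow> 'a set \<times> 'a set \<Rightarrow> enat" where
  "surplus le N =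
     (if (\<forall>x\<in>fst N. \<forall>y\<in>snd N. lt_of le x y) then \<infinity>
      else enat (GREATEST m. \<forall>B. B \<subseteq> fst N \<and> B \<noteq> {} \<longrightarrow>
          card {y\<in>snd N. \<exists>x\<in>B. le x y} \<ge> min (card B + m) (card (snd N))))"

definition characteristics :: "('a \<Rightarrow> 'a \<Rightarrow> bool) \<Rightarrow> 'a set \<times> 'a set \<Rightarrow> nat \<times> enat" where
  "characteristics le N = (card (fst N), surplus le N)"

definition dilworth_clique :: "('a \<Rightarrow> 'a \<Rightarrow> bool) \<Rightarrow> 'a set \<times> 'a set \<Rightarrow> nat \<Rightarrow> 'a set \<Rightarrow> bool" where
  "dilworth_clique le N m C \<longleftrightarrow>
     (\<exists>xs ys f. C = xs ` {..<m} \<union> ys ` {..<m}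
        \<and> (\<forall>i<m. xs i \<in> fst N \<and> ys i \<in> snd N)
        \<and> (\<forall>i<m. \<forall>j<m. lt_of le (xs i) (ys j))
        \<and> inj_on xs {..<m}
        \<and> perfect_matching le (fst N) (snd N) f \<and> (\<forall>i<m. f (xs i) = ys i))"

definition clique_width :: "nat \<Rightarrow> nat" where
  "clique_width w = nat \<lceil>sqrt (real w)\<rceil>"

definition active :: "'a set \<Rightarrow> ('a \<Rightarrow> 'a \<Rightarrow> bool) \<Rightarrow> (nat \<Rightarrow> 'a set) \<Rightarrow> nat \<Rightarrow> 'a set \<times> 'a set \<Rightarrow> bool" where
  "active P le A k N \<longleftrightarrow> is_node P le A k N
     \<and> (\<exists>C. dilworth_clique le N (clique_width (width_of P le)) C)
     \<and> \<not> (\<exists>K. proper_ancestor P le A k K N \<and> characteristics le K = characteristics le N)"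

definition active_class :: "'a set \<Rightarrow> ('a \<Rightarrow> 'a \<Rightarrow> bool) \<Rightarrow> (nat \<Rightarrow> 'a set) \<Rightarrow> nat
     \<Rightarrow> nat \<times> enat \<Rightarrow> ('a set \<times> 'a set) set" where
  "active_class P le A k us = {N. active P le A k N \<and> characteristics le N = us}"

definition class_less :: "('a \<Rightarrow> 'a \<Rightarrow> bool) \<Rightarrow> ('a set \<times> 'a set \<Rightarrow> 'a set)
     \<Rightarrow> 'a set \<times> 'a set \<Rightarrow> 'a set \<times> 'a set \<Rightarrow> bool" where
  "class_less le R N K \<longleftrightarrow>
     (\<exists>x y. x \<in> R N \<and> \<not> (\<exists>z\<in>R N. lt_of le x z)
          \<and> y \<in> R K \<and> \<not> (\<exists>z\<in>R K. lt_of le z y) \<and> le x y)"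

definition chain_of :: "'b set \<Rightarrow> ('b \<Rightarrow> 'b \<Rightarrow> bool) \<Rightarrow> 'b set \<Rightarrow> bool" where
  "chain_of S r L \<longleftrightarrow> L \<subseteq> S \<and> (\<forall>x\<in>L. \<forall>y\<in>L. x \<noteq> y \<longrightarrow> r x y \<or> r y x)"

definition edges_of :: "('a \<Rightarrow> 'a \<Rightarrow> bool) \<Rightarrow> ('a set \<times> 'a set) set \<Rightarrow> ('a \<times> 'a) set" where
  "edges_of le F = {(a, b). \<exists>N\<in>F. a \<in> fst N \<and> b \<in> snd N \<and> lt_of le a b}"

definition edge_le :: "('a \<Rightarrow> 'a \<Rightarrow> bool) \<Rightarrow> 'a \<times> 'a \<Rightarrow> 'a \<times> 'a \<Rightarrow> bool" where
  "edge_le le e f \<longleftrightarrow> e = f \<or> le (snd e) (fst f)"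

definition mm_free :: "'b set \<Rightarrow> ('b \<Rightarrow> 'b \<Rightarrow> bool) \<Rightarrow> nat \<Rightarrow> bool" where
  "mm_free S r m \<longleftrightarrow> \<not> (\<exists>C1 C2. C1 \<subseteq> S \<and> C2 \<subseteq> S \<and> finite C1 \<and> finite C2
      \<and> card C1 = m \<and> card C2 = m \<and> C1 \<inter> C2 = {}
      \<and> (\<forall>x\<in>C1. \<forall>y\<in>C1. r x y \<or> r y x)
      \<and> (\<forall>x\<in>C2. \<forall>y\<in>C2. r x y \<or> r y x)
      \<and> (\<forall>x\<in>C1. \<forall>y\<in>C2. \<not> r x y \<and> \<not> r y x))"

end

theory Submission
  imports Defs
begin



lemma rtranclp_sym:
  assumes "\<And>x y. r x y \<Longrightarrow> r y x" and "r\<^sup>*\<^sup>* a b"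
  shows "r\<^sup>*\<^sup>* b a"
  using assms(2)
proof induction
  case base then show ?case by simp
next
  case (step y z)
  then show ?case using assms(1) by (meson converse_rtranclp_into_rtranclp)
qed

lemma bip_adj_sym: "bip_adj le X Y a b \<Longrightarrow> bip_adj le X Y b a"
  unfolding bip_adj_def by blast

lemma strict_hall:
  assumes fin: "finite As"
    and disj: "Ap \<inter> As = {}"
    and reg: "regular_bip le Ap As"
    and pm: "perfect_matching le Ap As f"
    and VA: "V \<subseteq> Ap" and finV: "finite V"
    and v: "v \<in> V" and x: "x \<in> Ap" "x \<notin> V"
    and path: "(bip_adj le Ap As)\<^sup>*\<^sup>* v x"
    and AsP: "As \<subseteq> P"
  shows "card V + 1 \<le> card (up_set P le V \<inter> As)"
proof (rule ccontr)
  let ?U = "up_set P le V \<inter> As"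
  assume "\<not> ?thesis"
  hence lt: "card ?U \<le> card V" by simp
  have img: "g ` V = ?U" if g: "perfect_matching le Ap As g" for g
  proof -
    have gA: "g ` Ap = As" and inj: "inj_on g Ap" and lt': "\<forall>x\<in>Ap. lt_of le x (g x)"
      using g unfolding perfect_matching_def bij_betw_def by auto
    have sub: "g ` V \<subseteq> ?U"
    proof
      fix y assume "y \<in> g ` V"
      then obtain v where v: "v \<in> V" "y = g v" by auto
      have "y \<in> As" using gA v VA by auto
      moreover have "le v y" using lt' v VA unfolding lt_of_def by auto
      ultimately show "y \<in> ?U" using v AsP unfolding up_set_def by auto
    qed
    have c1: "card (g ` V) = card V" using inj VA by (meson card_image inj_on_subset)
    have finU: "finite ?U" using fin by simp
    have "card ?U \<le> card (g ` V)" using c1 lt by simp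
    moreover have "card (g ` V) \<le> card ?U" using card_mono[OF finU sub] .
    ultimately show ?thesis using card_subset_eq[OF finU sub] by simp
  qed
  define Cl where "Cl = V \<union> ?U"
  have closed: "b \<in> Cl" if ab: "bip_adj le Ap As a b" and a: "a \<in> Cl" for a b
  proof -
    from ab consider (1) "a \<in> Ap" "b \<in> As" "lt_of le a b" | (2) "b \<in> Ap" "a \<in> As" "lt_of le b a"
      unfolding bip_adj_def by blast
    then show "b \<in> Cl"
    proof cases
      case 1
      then have "a \<in> V" using a disj unfolding Cl_def by auto
      then show ?thesis using 1 AsP unfolding Cl_def up_set_def lt_of_def by auto
    next
      case 2
      then have aU: "a \<in> ?U" using a disj VA unfolding Cl_def by auto
      show ?thesis
      proof (rule ccontr)
        assume "b \<notin> Cl" hence bV: "b \<notin> V" unfolding Cl_def by auto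
        obtain g where g: "perfect_matching le Ap As g" "g b = a"
          using reg 2 unfolding regular_bip_def by blast
        have "a \<in> g ` V" using img[OF g(1)] aU by simp
        then obtain v' where v': "v' \<in> V" "g v' = a" by auto
        moreover have "inj_on g Ap" using g(1) unfolding perfect_matching_def bij_betw_def by simp
        ultimately have "b = v'" using g(2) 2 VA by (metis inj_onD subsetD)
        with bV v' show False by simp
      qed
    qed
  qed
  have "x \<in> Cl" using path
  proof induction
    case base then show ?case using v unfolding Cl_def by simp
  next
    case (step y z) then show ?case using closed by blast
  qed
  then show False using x disj VA unfolding Cl_def by auto
qed

lemma mon_general:
  assumes po: "poset_on P le"
    and anta: "antichain_in P le Aa" and antb: "antichain_in P le Ab"
    and cardB: "card Ab = w" and wmax: "\<And>Z. antichain_in P le Z \<Longrightarrow> card Z \<le> w"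
    and sq: "sq_le P le Aa Ab" and S: "S \<subseteq> Aa"
  shows "card S \<le> card (up_set P le S \<inter> Ab)"
proof -
  let ?U = "up_set P le S"
  have finP: "finite P" using po unfolding poset_on_def by simp
  have refl: "\<And>x. x \<in> P \<Longrightarrow> le x x" using po unfolding poset_on_def by simp
  have antis: "\<And>x y. x \<in> P \<Longrightarrow> y \<in> P \<Longrightarrow> le x y \<Longrightarrow> le y x \<Longrightarrow> x = y"
    using po unfolding poset_on_def by blast
  have trans: "\<And>x y z. x \<in> P \<Longrightarrow> y \<in> P \<Longrightarrow> z \<in> P \<Longrightarrow> le x y \<Longrightarrow> le y z \<Longrightarrow> le x z"
    using po unfolding poset_on_def by blast
  have AaP: "Aa \<subseteq> P" and AbP: "Ab \<subseteq> P" using anta antb unfolding antichain_in_def by auto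
  have finS: "finite S" using S AaP finP by (meson finite_subset)
  have finB: "finite Ab" using AbP finP by (meson finite_subset)
  define Z where "Z = S \<union> (Ab - ?U)"
  have "antichain_in P le Z"
    unfolding antichain_in_def
  proof (intro conjI ballI impI)
    show "Z \<subseteq> P" using S AaP AbP unfolding Z_def by auto
  next
    fix x y assume x: "x \<in> Z" and y: "y \<in> Z" and xy: "le x y"
    show "x = y"
    proof (cases "x \<in> S")
      case True
      show ?thesis
      proof (cases "y \<in> S")
        case True
        then show ?thesis using \<open>x \<in> S\<close> S anta xy unfolding antichain_in_def by blast
      next
        case False
        then have "y \<in> Ab" "y \<notin> ?U" using y unfolding Z_def by auto
        then have False using \<open>x \<in> S\<close> xy AbP unfolding up_set_def by auto
        then show ?thesis ..
      qed
    next
      case False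
      then have xB: "x \<in> Ab" "x \<notin> ?U" using x unfolding Z_def by auto
      show ?thesis
      proof (cases "y \<in> S")
        case True
        then have "y \<in> Aa" using S by auto
        then obtain z where z: "z \<in> Ab" "le y z" using sq unfolding sq_le_def down_set_def by auto
        have "le x z" using trans[of x y z] xB z xy \<open>y \<in> Aa\<close> AaP AbP by blast
        then have "x = z" using antb xB z unfolding antichain_in_def by blast
        then have "x = y" using antis[of x y] xy z xB \<open>y \<in> Aa\<close> AaP AbP by blast
        then have False using True xB AbP refl unfolding up_set_def by blast
        then show ?thesis ..
      next
        case False
        then have "y \<in> Ab" using y unfolding Z_def by auto
        then show ?thesis using xB antb xy unfolding antichain_in_def by blast
      qed
    qed
  qed
  then have cZ: "card Z \<le> w" using wmax by blast
  have disj: "S \<inter> (Ab - ?U) = {}" using S AaP refl unfolding up_set_def by blast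
  have "card Z = card S + card (Ab - ?U)" unfolding Z_def
    using card_Un_disjoint[OF finS _ disj] finB by simp
  moreover have "card Ab = card (?U \<inter> Ab) + card (Ab - ?U)"
  proof -
    have "Ab = (?U \<inter> Ab) \<union> (Ab - ?U)" by auto
    moreover have "(?U \<inter> Ab) \<inter> (Ab - ?U) = {}" by auto
    ultimately show ?thesis using card_Un_disjoint finB
      by (metis Diff_subset finite_subset inf_le2)
  qed
  ultimately show ?thesis using cZ cardB by linarith
qed




locale rposet =
  fixes P :: "'a set" and le :: "'a \<Rightarrow> 'a \<Rightarrow> bool" and A :: "nat \<Rightarrow> 'a set" and k w :: nat
  assumes reg: "regular_poset P le A k" and w_def: "w = width_of P le"
begin

lemma po: "poset_on P le" using reg unfolding regular_poset_def by simp
lemma finP: "finite P" using po unfolding poset_on_def by simp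
lemma refl: "x \<in> P \<Longrightarrow> le x x" using po unfolding poset_on_def by simp
lemma antis: "x \<in> P \<Longrightarrow> y \<in> P \<Longrightarrow> le x y \<Longrightarrow> le y x \<Longrightarrow> x = y"
  using po unfolding poset_on_def by blast
lemma trans: "x \<in> P \<Longrightarrow> y \<in> P \<Longrightarrow> z \<in> P \<Longrightarrow> le x y \<Longrightarrow> le y z \<Longrightarrow> le x z"
  using po unfolding poset_on_def by blast

lemma anti_card: "antichain_in P le Z \<Longrightarrow> card Z \<le> w"
proof -
  assume Z: "antichain_in P le Z"
  have "{card B |B. antichain_in P le B} \<subseteq> card ` Pow P" by (auto simp: antichain_in_def)
  then have "finite {card B |B. antichain_in P le B}" using finP by (meson finite_Pow_iff finite_imageI finite_subset)
  moreover have "card Z \<in> {card B |B. antichain_in P le B}" using Z by blast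
  ultimately show ?thesis unfolding w_def width_of_def by (rule Max_ge)
qed

lemma A_max: "i \<in> {1..k} \<Longrightarrow> maximum_antichain P le (A i)"
  using reg unfolding regular_poset_def by blast
lemma A_anti: "i \<in> {1..k} \<Longrightarrow> antichain_in P le (A i)"
  using A_max unfolding maximum_antichain_def by blast
lemma A_card: "i \<in> {1..k} \<Longrightarrow> card (A i) = w"
  using A_max unfolding maximum_antichain_def w_def by blast
lemma A_sub: "i \<in> {1..k} \<Longrightarrow> A i \<subseteq> P"
  using A_anti unfolding antichain_in_def by blast
lemma A_ac: "i \<in> {1..k} \<Longrightarrow> x \<in> A i \<Longrightarrow> y \<in> A i \<Longrightarrow> le x y \<Longrightarrow> x = y"
  using A_anti unfolding antichain_in_def by blast
lemma A_ne: "i \<in> {1..k} \<Longrightarrow> A i \<noteq> {}"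
  using reg unfolding regular_poset_def by blast
lemma A_disj: "i \<in> {1..k} \<Longrightarrow> j \<in> {1..k} \<Longrightarrow> i \<noteq> j \<Longrightarrow> A i \<inter> A j = {}"
  using reg unfolding regular_poset_def by blast
lemma A_meet: "i \<in> {1..k} \<Longrightarrow> j \<in> {1..k} \<Longrightarrow> x \<in> A i \<Longrightarrow> x \<in> A j \<Longrightarrow> i = j"
  using A_disj by blast
lemma A_lin: "i \<in> {1..k} \<Longrightarrow> j \<in> {1..k} \<Longrightarrow> sq_le P le (A i) (A j) \<or> sq_le P le (A j) (A i)"
  using reg unfolding regular_poset_def by blast
lemma A_fin: "i \<in> {1..k} \<Longrightarrow> finite (A i)"
  using A_sub finP finite_subset by blast
lemma w_pos: "1 \<le> w"
proof -
  have "1 \<in> {1..k}" using reg unfolding regular_poset_def by auto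
  then show ?thesis using A_card A_ne A_fin by (metis One_nat_def Suc_leI card_gt_0_iff)
qed

lemma sq_refl: "B \<subseteq> P \<Longrightarrow> sq_le P le B B"
  unfolding sq_le_def down_set_def using refl by blast

lemma sq_trans: "sq_le P le B C \<Longrightarrow> sq_le P le C D \<Longrightarrow> D \<subseteq> P \<Longrightarrow> sq_le P le B D"
  unfolding sq_le_def down_set_def using trans by blast

lemma sq_antisym: "i \<in> {1..k} \<Longrightarrow> j \<in> {1..k} \<Longrightarrow> sq_le P le (A i) (A j) \<Longrightarrow> sq_le P le (A j) (A i) \<Longrightarrow> A i = A j"
proof -
  assume i: "i \<in> {1..k}" and j: "j \<in> {1..k}" and ij: "sq_le P le (A i) (A j)" and ji: "sq_le P le (A j) (A i)"
  have "x \<in> A j" if x: "x \<in> A i" for x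
  proof -
    obtain y where y: "y \<in> A j" "le x y" using ij x unfolding sq_le_def down_set_def by blast
    obtain z where z: "z \<in> A i" "le y z" using ji y unfolding sq_le_def down_set_def by blast
    have "le x z" using trans[of x y z] x y z A_sub[OF i] A_sub[OF j] by blast
    then have "x = z" using A_ac[OF i] x z by blast
    then have "x = y" using antis[of x y] y z x A_sub[OF i] A_sub[OF j] by blast
    then show ?thesis using y by simp
  qed
  moreover have "x \<in> A i" if x: "x \<in> A j" for x
  proof -
    obtain y where y: "y \<in> A i" "le x y" using ji x unfolding sq_le_def down_set_def by blast
    obtain z where z: "z \<in> A j" "le y z" using ij y unfolding sq_le_def down_set_def by blast
    have "le x z" using trans[of x y z] x y z A_sub[OF i] A_sub[OF j] by blast
    then have "x = z" using A_ac[OF j] x z by blast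
    then have "x = y" using antis[of x y] y z x A_sub[OF i] A_sub[OF j] by blast
    then show ?thesis using y by simp
  qed
  ultimately show ?thesis by blast
qed

lemma mon: "i \<in> {1..k} \<Longrightarrow> j \<in> {1..k} \<Longrightarrow> sq_le P le (A i) (A j) \<Longrightarrow> S \<subseteq> A i
   \<Longrightarrow> card S \<le> card (up_set P le S \<inter> A j)"
  by (rule mon_general[OF po A_anti A_anti A_card anti_card])

lemma up_trans: "T \<subseteq> P \<Longrightarrow> up_set P le (up_set P le T \<inter> X) \<subseteq> up_set P le T"
  unfolding up_set_def using trans by blast

lemma up_self: "T \<subseteq> P \<Longrightarrow> T \<subseteq> up_set P le T"
  unfolding up_set_def using refl by blast

definition good :: "nat \<Rightarrow> nat \<Rightarrow> bool" where
  "good p s \<longleftrightarrow> p \<in> {1..k} \<and> s \<in> {1..k} \<and> sq_lt P le (A p) (A s) \<and> regular_bip le (A p) (A s)"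

lemma is_node_good: "is_node P le A k N \<Longrightarrow> \<exists>p s. good p s \<and> node_of le (A p) (A s) N"
proof -
  assume "is_node P le A k N"
  then obtain t p s where t: "t \<in> {2..k}" and c: "consec P le A t p s" and n: "node_of le (A p) (A s) N"
    unfolding is_node_def by blast
  have "regular_bip le (A p) (A s)" using reg t c unfolding regular_poset_def by blast
  moreover have "p \<in> {1..k}" "s \<in> {1..k}" "sq_lt P le (A p) (A s)" using c t unfolding consec_def by auto
  ultimately show ?thesis using n unfolding good_def by blast
qed

definition pN :: "'a set \<times> 'a set \<Rightarrow> nat" where
  "pN N = fst (SOME ps. good (fst ps) (snd ps) \<and> node_of le (A (fst ps)) (A (snd ps)) N)"
definition sN :: "'a set \<times> 'a set \<Rightarrow> nat" where
  "sN N = snd (SOME ps. good (fst ps) (snd ps) \<and> node_of le (A (fst ps)) (A (snd ps)) N)"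

lemma pN_sN: "is_node P le A k N \<Longrightarrow> good (pN N) (sN N) \<and> node_of le (A (pN N)) (A (sN N)) N"
proof -
  assume "is_node P le A k N"
  then obtain p s where "good p s \<and> node_of le (A p) (A s) N" using is_node_good by blast
  then have "good (fst (p,s)) (snd (p,s)) \<and> node_of le (A (fst (p,s))) (A (snd (p,s))) N" by simp
  then show ?thesis unfolding pN_def sN_def by (rule someI)
qed

lemma good_idx: "good p s \<Longrightarrow> p \<in> {1..k} \<and> s \<in> {1..k}" unfolding good_def by blast
lemma good_sq: "good p s \<Longrightarrow> sq_le P le (A p) (A s)" unfolding good_def sq_lt_def by blast
lemma good_neq: "good p s \<Longrightarrow> A p \<noteq> A s" unfolding good_def sq_lt_def by blast
lemma good_reg: "good p s \<Longrightarrow> regular_bip le (A p) (A s)" unfolding good_def by blast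
lemma good_disj: "good p s \<Longrightarrow> A p \<inter> A s = {}"
  using good_idx good_neq A_disj by metis

lemma good_pm: "good p s \<Longrightarrow> \<exists>f. perfect_matching le (A p) (A s) f"
proof -
  assume g: "good p s"
  obtain x where x: "x \<in> A p" using A_ne good_idx[OF g] by blast
  obtain y where y: "y \<in> A s" "le x y" using good_sq[OF g] x unfolding sq_le_def down_set_def by blast
  have "x \<noteq> y" using good_disj[OF g] x y by blast
  then have "lt_of le x y" using y unfolding lt_of_def by simp
  then show ?thesis using good_reg[OF g] x y unfolding regular_bip_def by blast
qed

lemma node_conn:
  assumes "node_of le Ap As N" "z1 \<in> fst N \<union> snd N" "z2 \<in> fst N \<union> snd N"
  shows "(bip_adj le Ap As)\<^sup>*\<^sup>* z1 z2"
proof -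
  obtain u where u: "fst N \<union> snd N = {v. (bip_adj le Ap As)\<^sup>*\<^sup>* u v}"
    using assms(1) unfolding node_of_def component_of_def by blast
  have "(bip_adj le Ap As)\<^sup>*\<^sup>* u z1" "(bip_adj le Ap As)\<^sup>*\<^sup>* u z2" using u assms by auto
  then show ?thesis using rtranclp_sym[of "bip_adj le Ap As" u z1] bip_adj_sym
    by (metis (no_types, lifting) rtranclp_trans)
qed

lemma node_closed:
  assumes "node_of le Ap As N" "z \<in> fst N \<union> snd N" "bip_adj le Ap As z z'"
  shows "z' \<in> fst N \<union> snd N"
proof -
  obtain u where u: "fst N \<union> snd N = {v. (bip_adj le Ap As)\<^sup>*\<^sup>* u v}"
    using assms(1) unfolding node_of_def component_of_def by blast
  have "(bip_adj le Ap As)\<^sup>*\<^sup>* u z" using u assms by auto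
  then have "(bip_adj le Ap As)\<^sup>*\<^sup>* u z'" using assms(3) by (rule rtranclp.rtrancl_into_rtrancl)
  then show ?thesis using u by auto
qed

lemma node_sub: "node_of le Ap As N \<Longrightarrow> fst N \<subseteq> Ap \<and> snd N \<subseteq> As"
  unfolding node_of_def by blast

lemma grow2:
  assumes g: "good p s" and n: "node_of le (A p) (A s) N" and T: "T \<subseteq> P"
    and v: "v \<in> up_set P le T" "v \<in> fst N" and x: "x \<in> fst N" "x \<notin> up_set P le T"
  shows "card (up_set P le T \<inter> A p) + 1 \<le> card (up_set P le T \<inter> A s)"
proof -
  let ?V = "up_set P le T \<inter> A p"
  obtain f where f: "perfect_matching le (A p) (A s) f" using good_pm[OF g] by blast
  have ns: "fst N \<subseteq> A p" "snd N \<subseteq> A s" using node_sub[OF n] by auto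
  have "card ?V + 1 \<le> card (up_set P le ?V \<inter> A s)"
  proof (rule strict_hall[OF A_fin good_disj[OF g] good_reg[OF g] f])
    show "A s \<subseteq> P" "s \<in> {1..k}" using A_sub good_idx[OF g] by auto
    show "?V \<subseteq> A p" by blast
    show "finite ?V" using A_fin good_idx[OF g] by blast
    show "v \<in> ?V" using v ns by blast
    show "x \<in> A p" "x \<notin> ?V" using x ns by auto
    show "(bip_adj le (A p) (A s))\<^sup>*\<^sup>* v x" using node_conn[OF n] v x by blast
  qed
  also have "\<dots> \<le> card (up_set P le T \<inter> A s)"
    apply (rule card_mono)
    using A_fin good_idx[OF g] apply blast
    using up_trans[OF T] by blast
  finally show ?thesis .
qed

lemma grow1:
  assumes g: "good p s" and n: "node_of le (A p) (A s) N" and T: "T \<subseteq> P"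
    and b: "b \<in> T" "b \<in> snd N" and x: "x \<in> fst N" "x \<notin> up_set P le T"
  shows "card (up_set P le T \<inter> A p) + 1 \<le> card (up_set P le T \<inter> A s)"
proof (cases "\<exists>v \<in> up_set P le T \<inter> A p. le v b")
  case True
  then obtain v where v: "v \<in> up_set P le T" "v \<in> A p" "le v b" by blast
  have ns: "fst N \<subseteq> A p" "snd N \<subseteq> A s" using node_sub[OF n] by auto
  have "v \<noteq> b" using good_disj[OF g] v b ns by blast
  then have "bip_adj le (A p) (A s) b v" using v b ns unfolding bip_adj_def lt_of_def by blast
  then have "v \<in> fst N \<union> snd N" using node_closed[OF n] b by blast
  then have "v \<in> fst N" using good_disj[OF g] v ns by blast
  then show ?thesis using grow2[OF g n T v(1) _ x] by blast
next
  case False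
  let ?V = "up_set P le T \<inter> A p"
  let ?W = "(up_set P le ?V \<inter> A s) \<union> {b}"
  have ns: "fst N \<subseteq> A p" "snd N \<subseteq> A s" using node_sub[OF n] by auto
  have bn: "b \<notin> up_set P le ?V" using False unfolding up_set_def by blast
  have fin: "finite (up_set P le ?V \<inter> A s)" using A_fin good_idx[OF g] by blast
  have "card ?W = card (up_set P le ?V \<inter> A s) + 1" using bn fin by simp
  moreover have "card ?V \<le> card (up_set P le ?V \<inter> A s)"
    using mon[of p s ?V] good_idx[OF g] good_sq[OF g] by blast
  moreover have "card ?W \<le> card (up_set P le T \<inter> A s)"
  proof (rule card_mono)
    show "finite (up_set P le T \<inter> A s)" using A_fin good_idx[OF g] by blast
    show "?W \<subseteq> up_set P le T \<inter> A s" using up_trans[OF T] up_self[OF T] b ns by blast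
  qed
  ultimately show ?thesis by linarith
qed

end




lemma inj_count:
  fixes g :: "'b \<Rightarrow> nat"
  assumes "finite H" "H \<noteq> {}" "\<forall>x\<in>H. \<forall>y\<in>H. x \<noteq> y \<longrightarrow> g x \<noteq> g y"
    "\<forall>x\<in>H. \<beta> \<le> g x \<and> g x \<le> B"
  shows "card H + \<beta> \<le> B + 1"
proof -
  have inj: "inj_on g H" using assms(3) unfolding inj_on_def by blast
  have "g ` H \<subseteq> {\<beta>..B}" using assms(4) by auto
  then have "card (g ` H) \<le> card {\<beta>..B}" by (intro card_mono) auto
  then have "card H \<le> B + 1 - \<beta>" using card_image[OF inj] by simp
  moreover obtain x where "x \<in> H" using assms(2) by blast
  then have "\<beta> \<le> B" using assms(4) by force
  ultimately show ?thesis by linarith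
qed

lemma edges_ofD: "e \<in> edges_of le F \<Longrightarrow> \<exists>N\<in>F. fst e \<in> fst N \<and> snd e \<in> snd N \<and> lt_of le (fst e) (snd e)"
  by (cases e) (auto simp: edges_of_def)

locale rpL = rposet +
  fixes R :: "'a set \<times> 'a set \<Rightarrow> 'a set" and L :: "('a set \<times> 'a set) set" and us :: "nat \<times> enat"
  assumes R: "\<forall>N. active P le A k N \<longrightarrow> dilworth_clique le N (clique_width w) (R N)"
    and L: "chain_of (active_class P le A k us) (class_less le R) L"
begin

lemma c_pos: "1 \<le> clique_width w"
proof -
  have "1 \<le> real w" using w_pos by simp
  then have "1 \<le> sqrt (real w)" by simp
  then have "1 \<le> \<lceil>sqrt (real w)\<rceil>" by linarith
  then show ?thesis unfolding clique_width_def by linarith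
qed

lemma c_le: "clique_width w \<le> w"
proof -
  have "1 \<le> real w" using w_pos by simp
  then have s1: "1 \<le> sqrt (real w)" by simp
  have "sqrt (real w) * 1 \<le> sqrt (real w) * sqrt (real w)"
    using mult_left_mono[OF s1, of "sqrt (real w)"] by simp
  then have "sqrt (real w) \<le> real w" by simp
  then have "\<lceil>sqrt (real w)\<rceil> \<le> int w" by (simp add: ceiling_le_iff)
  then show ?thesis unfolding clique_width_def by linarith
qed

lemma L_active: "N \<in> L \<Longrightarrow> active P le A k N"
  using L unfolding chain_of_def active_class_def by blast

lemma L_node: "N \<in> L \<Longrightarrow> good (pN N) (sN N) \<and> node_of le (A (pN N)) (A (sN N)) N"
  using L_active pN_sN unfolding active_def by blast

lemma L_chain: "N \<in> L \<Longrightarrow> K \<in> L \<Longrightarrow> N \<noteq> K \<Longrightarrow> class_less le R N K \<or> class_less le R K N"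
  using L unfolding chain_of_def by blast

lemma L_sub: "N \<in> L \<Longrightarrow> fst N \<subseteq> A (pN N) \<and> snd N \<subseteq> A (sN N)"
  using L_node node_sub by blast

lemma L_P: "N \<in> L \<Longrightarrow> fst N \<subseteq> P \<and> snd N \<subseteq> P"
  using L_sub L_node A_sub good_idx by blast

lemma L_disj: "N \<in> L \<Longrightarrow> fst N \<inter> snd N = {}"
  using L_sub L_node good_disj by blast

lemma L_fin: "finite L"
proof -
  have "L \<subseteq> Pow P \<times> Pow P"
  proof
    fix N assume "N \<in> L"
    then have "fst N \<subseteq> P" "snd N \<subseteq> P" using L_P by auto
    then show "N \<in> Pow P \<times> Pow P" by (cases N) auto
  qed
  then show ?thesis using finP by (meson finite_Pow_iff finite_SigmaI finite_subset)
qed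

lemma clq: "N \<in> L \<Longrightarrow> R N \<subseteq> fst N \<union> snd N \<and> card (R N \<inter> fst N) = clique_width w
   \<and> card (R N \<inter> snd N) = clique_width w
   \<and> (\<forall>x\<in>R N \<inter> fst N. \<forall>y\<in>R N \<inter> snd N. lt_of le x y)"
proof -
  assume N: "N \<in> L"
  let ?c = "clique_width w"
  have dc: "dilworth_clique le N ?c (R N)" using R L_active[OF N] by blast
  then obtain xs ys f where d: "R N = xs ` {..<?c} \<union> ys ` {..<?c}"
    and mem: "\<forall>i<?c. xs i \<in> fst N \<and> ys i \<in> snd N"
    and lt: "\<forall>i<?c. \<forall>j<?c. lt_of le (xs i) (ys j)"
    and inj: "inj_on xs {..<?c}"
    and pm: "perfect_matching le (fst N) (snd N) f" and fx: "\<forall>i<?c. f (xs i) = ys i"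
    unfolding dilworth_clique_def by blast
  have dj: "fst N \<inter> snd N = {}" using L_disj[OF N] .
  have xsm: "xs ` {..<?c} \<subseteq> fst N" and ysm: "ys ` {..<?c} \<subseteq> snd N" using mem by auto
  have e1: "R N \<inter> fst N = xs ` {..<?c}" unfolding d using xsm ysm dj by blast
  have e2: "R N \<inter> snd N = ys ` {..<?c}" unfolding d using xsm ysm dj by blast
  have injf: "inj_on f (fst N)" using pm unfolding perfect_matching_def bij_betw_def by blast
  have inj2: "inj_on ys {..<?c}"
  proof (rule inj_onI)
    fix i j assume i: "i \<in> {..<?c}" and j: "j \<in> {..<?c}" and eq: "ys i = ys j"
    then have "f (xs i) = f (xs j)" using fx by simp
    then have "xs i = xs j" using injf mem i j by (meson inj_onD lessThan_iff)
    then show "i = j" using inj i j by (meson inj_onD)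
  qed
  have A1: "R N \<subseteq> fst N \<union> snd N" unfolding d using xsm ysm by blast
  have A2: "card (R N \<inter> fst N) = ?c" using e1 card_image[OF inj] by simp
  have A3: "card (R N \<inter> snd N) = ?c" using e2 card_image[OF inj2] by simp
  have A4: "\<forall>x\<in>R N \<inter> fst N. \<forall>y\<in>R N \<inter> snd N. lt_of le x y" unfolding e1 e2 using lt by blast
  show ?thesis using A1 A2 A3 A4 by blast
qed

lemma clq_max: "N \<in> L \<Longrightarrow> y \<in> R N \<Longrightarrow> \<not> (\<exists>z\<in>R N. lt_of le y z) \<Longrightarrow> y \<in> snd N"
proof (rule ccontr)
  assume N: "N \<in> L" and y: "y \<in> R N" and m: "\<not> (\<exists>z\<in>R N. lt_of le y z)" and ny: "y \<notin> snd N"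
  have "y \<in> fst N" using clq[OF N] y ny by blast
  moreover have "R N \<inter> snd N \<noteq> {}" using clq[OF N] c_pos by (metis card.empty not_one_le_zero)
  ultimately show False using clq[OF N] m y by blast
qed

lemma clq_min: "N \<in> L \<Longrightarrow> y \<in> R N \<Longrightarrow> \<not> (\<exists>z\<in>R N. lt_of le z y) \<Longrightarrow> y \<in> fst N"
proof (rule ccontr)
  assume N: "N \<in> L" and y: "y \<in> R N" and m: "\<not> (\<exists>z\<in>R N. lt_of le z y)" and ny: "y \<notin> fst N"
  have "y \<in> snd N" using clq[OF N] y ny by blast
  moreover have "R N \<inter> fst N \<noteq> {}" using clq[OF N] c_pos by (metis card.empty not_one_le_zero)
  ultimately show False using clq[OF N] m y by blast
qed

lemma cl_link: "N \<in> L \<Longrightarrow> K \<in> L \<Longrightarrow> class_less le R N K \<Longrightarrow>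
   \<exists>y\<in>R N \<inter> snd N. \<exists>x\<in>R K \<inter> fst K. le y x"
proof -
  assume N: "N \<in> L" and K: "K \<in> L" and cl: "class_less le R N K"
  then obtain y x where "y \<in> R N" "\<not> (\<exists>z\<in>R N. lt_of le y z)" "x \<in> R K" "\<not> (\<exists>z\<in>R K. lt_of le z x)" "le y x"
    unfolding class_less_def by blast
  then show ?thesis using clq_max[OF N] clq_min[OF K] by blast
qed

lemma level: "N \<in> L \<Longrightarrow> K \<in> L \<Longrightarrow> class_less le R N K \<Longrightarrow> sq_le P le (A (sN N)) (A (pN K))"
proof -
  assume N: "N \<in> L" and K: "K \<in> L" and cl: "class_less le R N K"
  obtain y x where y: "y \<in> snd N" and x: "x \<in> fst K" and yx: "le y x" using cl_link[OF N K cl] by blast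
  have iN: "sN N \<in> {1..k}" and iK: "pN K \<in> {1..k}" using L_node[OF N] L_node[OF K] good_idx by auto
  have yA: "y \<in> A (sN N)" and xA: "x \<in> A (pN K)" using y x L_sub[OF N] L_sub[OF K] by auto
  show ?thesis
  proof (cases "sq_le P le (A (sN N)) (A (pN K))")
    case True then show ?thesis .
  next
    case False
    then have "sq_le P le (A (pN K)) (A (sN N))" using A_lin[OF iN iK] by blast
    then obtain z where z: "z \<in> A (sN N)" "le x z" using xA unfolding sq_le_def down_set_def by blast
    have PP: "x \<in> P" "y \<in> P" "z \<in> P" using xA yA z A_sub iN iK by auto
    have "le y z" using trans[of y x z] PP yx z by blast
    then have "y = z" using A_ac[OF iN] yA z by blast
    then have "x = y" using antis[of x y] PP yx z by blast
    then have "sN N = pN K" using A_meet[OF iN iK] xA yA by blast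
    then show ?thesis using sq_refl A_sub iN by metis
  qed
qed

definition rk :: "'a set \<times> 'a set \<Rightarrow> nat" where
  "rk N = card {i \<in> {1..k}. sq_le P le (A i) (A (pN N))}"

lemma rk_lt: "N \<in> L \<Longrightarrow> K \<in> L \<Longrightarrow> class_less le R N K \<Longrightarrow> rk N < rk K"
proof -
  assume N: "N \<in> L" and K: "K \<in> L" and cl: "class_less le R N K"
  have lv: "sq_le P le (A (sN N)) (A (pN K))" using level[OF N K cl] .
  have gN: "good (pN N) (sN N)" using L_node[OF N] by blast
  have iK: "pN K \<in> {1..k}" using L_node[OF K] good_idx by blast
  have ipN: "pN N \<in> {1..k}" and isN: "sN N \<in> {1..k}" using good_idx[OF gN] by auto
  have ps: "sq_le P le (A (pN N)) (A (sN N))" using good_sq[OF gN] .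
  have pK: "sq_le P le (A (pN N)) (A (pN K))" using sq_trans[OF ps lv] A_sub[OF iK] by blast
  let ?S1 = "{i \<in> {1..k}. sq_le P le (A i) (A (pN N))}"
  let ?S2 = "{i \<in> {1..k}. sq_le P le (A i) (A (pN K))}"
  have "?S1 \<subseteq> ?S2" using sq_trans[OF _ pK] A_sub[OF iK] by blast
  moreover have "pN K \<in> ?S2" using iK sq_refl A_sub by blast
  moreover have "pN K \<notin> ?S1"
  proof
    assume "pN K \<in> ?S1"
    then have kn: "sq_le P le (A (pN K)) (A (pN N))" by blast
    have "sq_le P le (A (sN N)) (A (pN N))" using sq_trans[OF lv kn] A_sub[OF ipN] by blast
    then have "A (pN N) = A (sN N)" using sq_antisym[OF ipN isN ps] by blast
    then show False using good_neq[OF gN] by blast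
  qed
  ultimately have "?S1 \<subset> ?S2" by blast
  then show ?thesis unfolding rk_def by (simp add: psubset_card_mono)
qed

lemma rk_less_cl: "N \<in> L \<Longrightarrow> K \<in> L \<Longrightarrow> rk N < rk K \<Longrightarrow> class_less le R N K"
  using L_chain rk_lt by (metis less_asym less_irrefl)

lemma rk_inj: "N \<in> L \<Longrightarrow> K \<in> L \<Longrightarrow> rk N = rk K \<Longrightarrow> N = K"
  using L_chain rk_lt by (metis less_irrefl)

definition gg :: "'a set \<Rightarrow> 'a set \<times> 'a set \<Rightarrow> nat" where
  "gg T N = card (up_set P le T \<inter> A (pN N))"
definition hh :: "'a set \<Rightarrow> 'a set \<times> 'a set \<Rightarrow> nat" where
  "hh T N = card (up_set P le T \<inter> A (sN N))"

lemma mono_gh: "T \<subseteq> P \<Longrightarrow> N \<in> L \<Longrightarrow> K \<in> L \<Longrightarrow> class_less le R N K \<Longrightarrow> hh T N \<le> gg T K"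
proof -
  assume T: "T \<subseteq> P" and N: "N \<in> L" and K: "K \<in> L" and cl: "class_less le R N K"
  have isN: "sN N \<in> {1..k}" and iK: "pN K \<in> {1..k}" using L_node[OF N] L_node[OF K] good_idx by auto
  let ?S = "up_set P le T \<inter> A (sN N)"
  have "card ?S \<le> card (up_set P le ?S \<inter> A (pN K))"
    using mon[OF isN iK level[OF N K cl], of ?S] by blast
  also have "\<dots> \<le> card (up_set P le T \<inter> A (pN K))"
    apply (rule card_mono) using A_fin[OF iK] apply blast using up_trans[OF T] by blast
  finally show ?thesis unfolding hh_def gg_def .
qed

lemma sweep:
  assumes T: "T \<subseteq> P" and H: "H \<subseteq> L" "H \<noteq> {}"
    and gr: "\<forall>N\<in>H. gg T N + 1 \<le> hh T N"
    and bd: "\<forall>N\<in>H. \<beta> \<le> gg T N \<and> gg T N \<le> B"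
  shows "card H + \<beta> \<le> B + 1"
proof (rule inj_count[OF _ H(2) _ bd])
  show "finite H" using H(1) L_fin finite_subset by blast
  show "\<forall>x\<in>H. \<forall>y\<in>H. x \<noteq> y \<longrightarrow> gg T x \<noteq> gg T y"
  proof (intro ballI impI)
    fix x y assume x: "x \<in> H" and y: "y \<in> H" and xy: "x \<noteq> y"
    have xL: "x \<in> L" and yL: "y \<in> L" using x y H by auto
    from L_chain[OF xL yL xy] show "gg T x \<noteq> gg T y"
    proof
      assume "class_less le R x y"
      then have "hh T x \<le> gg T y" using mono_gh[OF T xL yL] by blast
      then show ?thesis using gr x by fastforce
    next
      assume "class_less le R y x"
      then have "hh T y \<le> gg T x" using mono_gh[OF T yL xL] by blast
      then show ?thesis using gr y by fastforce
    qed
  qed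
qed

end




context rpL
begin

lemma same_node_no: "N \<in> L \<Longrightarrow> y \<in> snd N \<Longrightarrow> x \<in> fst N \<Longrightarrow> le y x \<Longrightarrow> False"
proof -
  assume N: "N \<in> L" and y: "y \<in> snd N" and x: "x \<in> fst N" and yx: "le y x"
  have g: "good (pN N) (sN N)" using L_node[OF N] by blast
  have ip: "pN N \<in> {1..k}" and iS: "sN N \<in> {1..k}" using good_idx[OF g] by auto
  have xA: "x \<in> A (pN N)" and yA: "y \<in> A (sN N)" using L_sub[OF N] x y by auto
  obtain z where z: "z \<in> A (sN N)" "le x z" using good_sq[OF g] xA unfolding sq_le_def down_set_def by blast
  have PP: "x \<in> P" "y \<in> P" "z \<in> P" using xA yA z A_sub ip iS by auto
  have "le y z" using trans[of y x z] PP yx z by blast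
  then have "y = z" using A_ac[OF iS] yA z by blast
  then have "x = y" using antis[of x y] PP yx z by blast
  then show False using good_disj[OF g] xA yA by blast
qed

lemma edge_P: "e \<in> edges_of le L \<Longrightarrow> fst e \<in> P \<and> snd e \<in> P"
  using edges_ofD L_P by blast

lemma edges_fin: "finite (edges_of le L)"
proof -
  have "edges_of le L \<subseteq> P \<times> P"
  proof
    fix e assume "e \<in> edges_of le L"
    then show "e \<in> P \<times> P" using edge_P by (cases e) auto
  qed
  then show ?thesis using finP finite_subset by blast
qed

lemma gg_bound_out: "T \<subseteq> P \<Longrightarrow> N \<in> L \<Longrightarrow> x \<in> fst N \<Longrightarrow> x \<notin> up_set P le T \<Longrightarrow> gg T N \<le> w - 1"
proof -
  assume T: "T \<subseteq> P" and N: "N \<in> L" and x: "x \<in> fst N" "x \<notin> up_set P le T"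
  have ip: "pN N \<in> {1..k}" using L_node[OF N] good_idx by blast
  have xA: "x \<in> A (pN N)" using L_sub[OF N] x by blast
  have "up_set P le T \<inter> A (pN N) \<subseteq> A (pN N) - {x}" using x by blast
  then have "gg T N \<le> card (A (pN N) - {x})" unfolding gg_def
    by (intro card_mono) (use A_fin[OF ip] in auto)
  also have "\<dots> = w - 1" using A_card[OF ip] xA A_fin[OF ip] by simp
  finally show ?thesis .
qed

lemma width_bound:
  assumes E: "antichain_in (edges_of le L) (edge_le le) E"
  shows "card E \<le> w ^ 3"
proof -
  have Esub: "E \<subseteq> edges_of le L" using E unfolding antichain_in_def by blast
  have Eac: "\<And>e e'. e \<in> E \<Longrightarrow> e' \<in> E \<Longrightarrow> edge_le le e e' \<Longrightarrow> e = e'"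
    using E unfolding antichain_in_def by blast
  define T where "T = snd ` E"
  have TP: "T \<subseteq> P" unfolding T_def using Esub edge_P by blast
  have notup: "fst e \<notin> up_set P le T" if e: "e \<in> E" for e
  proof
    assume "fst e \<in> up_set P le T"
    then obtain e' where e': "e' \<in> E" "le (snd e') (fst e)" unfolding up_set_def T_def by blast
    then have "edge_le le e' e" unfolding edge_le_def by blast
    then have "e' = e" using Eac e' e by blast
    then have "le (snd e) (fst e)" using e' by simp
    moreover have "lt_of le (fst e) (snd e)" using edges_ofD Esub e by blast
    moreover have "fst e \<in> P \<and> snd e \<in> P" using edge_P[of e] Esub e by blast
    ultimately show False using antis[of "fst e" "snd e"] unfolding lt_of_def by blast
  qed
  define H where "H = {N \<in> L. \<exists>e\<in>E. fst e \<in> fst N \<and> snd e \<in> snd N}"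
  have HL: "H \<subseteq> L" unfolding H_def by blast
  have finH: "finite H" using HL L_fin finite_subset by blast
  have cardH: "card H \<le> w"
  proof (cases "H = {}")
    case True then show ?thesis by simp
  next
    case False
    have "card H + 0 \<le> (w - 1) + 1"
    proof (rule sweep[OF TP HL False])
      show "\<forall>N\<in>H. gg T N + 1 \<le> hh T N"
      proof
        fix N assume "N \<in> H"
        then obtain e where N: "N \<in> L" and e: "e \<in> E" "fst e \<in> fst N" "snd e \<in> snd N" unfolding H_def by blast
        have "snd e \<in> T" unfolding T_def using e by blast
        then show "gg T N + 1 \<le> hh T N" unfolding gg_def hh_def
          using grow1[OF conjunct1[OF L_node[OF N]] conjunct2[OF L_node[OF N]] TP _ e(3) e(2) notup[OF e(1)]]
          by blast
      qed
      show "\<forall>N\<in>H. 0 \<le> gg T N \<and> gg T N \<le> w - 1"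
      proof
        fix N assume "N \<in> H"
        then obtain e where N: "N \<in> L" and e: "e \<in> E" "fst e \<in> fst N" "snd e \<in> snd N" unfolding H_def by blast
        show "0 \<le> gg T N \<and> gg T N \<le> w - 1" using gg_bound_out[OF TP N e(2) notup[OF e(1)]] by simp
      qed
    qed
    then show ?thesis using w_pos by linarith
  qed
  have Ecov: "E \<subseteq> (\<Union>N\<in>H. fst N \<times> snd N)"
  proof
    fix e assume e: "e \<in> E"
    then obtain N where N: "N \<in> L" "fst e \<in> fst N" "snd e \<in> snd N" using edges_ofD Esub by blast
    then have "N \<in> H" unfolding H_def using e by blast
    moreover have "e \<in> fst N \<times> snd N" using N by (simp add: mem_Times_iff)
    ultimately show "e \<in> (\<Union>N\<in>H. fst N \<times> snd N)" by blast
  qed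
  have "finite (fst N \<times> snd N)" if "N \<in> H" for N
  proof -
    have "fst N \<subseteq> P" "snd N \<subseteq> P" using L_P[of N] that HL by blast+
    then show ?thesis using finP finite_subset by blast
  qed
  then have finU: "finite (\<Union>N\<in>H. fst N \<times> snd N)" using finH by blast
  have "card E \<le> card (\<Union>N\<in>H. fst N \<times> snd N)" using card_mono[OF finU Ecov] .
  also have "\<dots> \<le> (\<Sum>N\<in>H. card (fst N \<times> snd N))" using card_UN_le[OF finH] .
  also have "\<dots> \<le> (\<Sum>N\<in>H. w * w)"
  proof (rule sum_mono)
    fix N assume "N \<in> H"
    then have N: "N \<in> L" using HL by blast
    have ip: "pN N \<in> {1..k}" and iS: "sN N \<in> {1..k}" using L_node[OF N] good_idx by auto
    have "card (fst N) \<le> w" using card_mono[OF A_fin[OF ip]] L_sub[OF N] A_card[OF ip] by metis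
    moreover have "card (snd N) \<le> w" using card_mono[OF A_fin[OF iS]] L_sub[OF N] A_card[OF iS] by metis
    ultimately show "card (fst N \<times> snd N) \<le> w * w" by (simp add: card_cartesian_product mult_le_mono)
  qed
  also have "\<dots> = card H * (w * w)" by simp
  also have "\<dots> \<le> w * (w * w)" using cardH by (simp add: mult_le_mono1)
  also have "\<dots> = w ^ 3" by (simp add: power3_eq_cube)
  finally show ?thesis .
qed

lemma width_part: "width_of (edges_of le L) (edge_le le) \<le> w ^ 3"
proof -
  let ?S = "{card B |B. antichain_in (edges_of le L) (edge_le le) B}"
  have "?S \<subseteq> card ` Pow (edges_of le L)" by (auto simp: antichain_in_def)
  then have fin: "finite ?S" using edges_fin by (meson finite_Pow_iff finite_imageI finite_subset)
  have "antichain_in (edges_of le L) (edge_le le) {}" unfolding antichain_in_def by blast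
  then have ne: "?S \<noteq> {}" by blast
  have "\<forall>a\<in>?S. a \<le> w ^ 3" using width_bound by blast
  then show ?thesis unfolding width_of_def using Max.boundedI[OF fin ne] by blast
qed

end




context rpL
begin

definition captured :: "'a set \<Rightarrow> 'a set \<times> 'a set \<Rightarrow> bool" where
  "captured T N \<longleftrightarrow> (\<exists>x\<in>R N \<inter> fst N. x \<in> up_set P le T)"

lemma host_card:
  assumes C: "C \<subseteq> edges_of le L"
    and ch: "\<forall>e\<in>C. \<forall>e'\<in>C. edge_le le e e' \<or> edge_le le e' e"
  shows "card C \<le> card {N\<in>L. \<exists>e\<in>C. fst e \<in> fst N \<and> snd e \<in> snd N}"
proof -
  let ?H = "{N\<in>L. \<exists>e\<in>C. fst e \<in> fst N \<and> snd e \<in> snd N}"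
  define hf where "hf e = (SOME N. N \<in> L \<and> fst e \<in> fst N \<and> snd e \<in> snd N)" for e
  have hf: "hf e \<in> L \<and> fst e \<in> fst (hf e) \<and> snd e \<in> snd (hf e)" if "e \<in> C" for e
  proof -
    have "e \<in> edges_of le L" using C that by blast
    then obtain N where "N \<in> L \<and> fst e \<in> fst N \<and> snd e \<in> snd N" using edges_ofD[of e le L] by blast
    then show ?thesis unfolding hf_def by (rule someI)
  qed
  have "inj_on hf C"
  proof (rule inj_onI)
    fix e e' assume e: "e \<in> C" and e': "e' \<in> C" and eq: "hf e = hf e'"
    show "e = e'"
    proof (rule ccontr)
      assume ne: "e \<noteq> e'"
      let ?N = "hf e"
      have N: "?N \<in> L" using hf[OF e] by blast
      from ch e e' have "edge_le le e e' \<or> edge_le le e' e" by blast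
      then have "le (snd e) (fst e') \<or> le (snd e') (fst e)" using ne unfolding edge_le_def by auto
      then show False
      proof
        assume "le (snd e) (fst e')"
        then show False using same_node_no[OF N, of "snd e" "fst e'"] hf[OF e] hf[OF e'] eq by auto
      next
        assume "le (snd e') (fst e)"
        then show False using same_node_no[OF N, of "snd e'" "fst e"] hf[OF e] hf[OF e'] eq by auto
      qed
    qed
  qed
  moreover have "hf ` C \<subseteq> ?H" using hf by blast
  moreover have "finite ?H" using L_fin by simp
  ultimately show ?thesis by (rule card_inj_on_le)
qed

lemma unc_card:
  assumes T: "T \<subseteq> P"
  shows "card {N\<in>L. (\<exists>b\<in>T. b \<in> snd N) \<and> \<not> captured T N} \<le> w - clique_width w + 1"
proof (cases "{N\<in>L. (\<exists>b\<in>T. b \<in> snd N) \<and> \<not> captured T N} = {}")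
  case True show ?thesis unfolding True by simp
next
  case False
  let ?H = "{N\<in>L. (\<exists>b\<in>T. b \<in> snd N) \<and> \<not> captured T N}"
  have "card ?H + 0 \<le> (w - clique_width w) + 1"
  proof (rule sweep[OF T _ False])
    show "?H \<subseteq> L" by blast
    show "\<forall>N\<in>?H. gg T N + 1 \<le> hh T N"
    proof
      fix N assume "N \<in> ?H"
      then obtain b where N: "N \<in> L" and b: "b \<in> T" "b \<in> snd N" and nc: "\<not> captured T N" by blast
      have "R N \<inter> fst N \<noteq> {}" using clq[OF N] c_pos by (metis card.empty not_one_le_zero)
      then obtain x where x: "x \<in> R N \<inter> fst N" by blast
      then have "x \<notin> up_set P le T" using nc unfolding captured_def by blast
      then show "gg T N + 1 \<le> hh T N" unfolding gg_def hh_def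
        using grow1[OF conjunct1[OF L_node[OF N]] conjunct2[OF L_node[OF N]] T b] x by blast
    qed
    show "\<forall>N\<in>?H. 0 \<le> gg T N \<and> gg T N \<le> w - clique_width w"
    proof
      fix N assume "N \<in> ?H"
      then have N: "N \<in> L" and nc: "\<not> captured T N" by auto
      have ip: "pN N \<in> {1..k}" using L_node[OF N] good_idx by blast
      let ?U = "up_set P le T \<inter> A (pN N)"
      let ?X = "R N \<inter> fst N"
      have d: "?U \<inter> ?X = {}" using nc unfolding captured_def by blast
      have sub: "?U \<union> ?X \<subseteq> A (pN N)" using L_sub[OF N] by blast
      have fU: "finite ?U" and fX: "finite ?X" using A_fin[OF ip] L_sub[OF N] finite_subset
        by (blast, meson inf_le2 subset_trans)
      have "card ?U + card ?X = card (?U \<union> ?X)" using card_Un_disjoint[OF fU fX d] by simp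
      also have "\<dots> \<le> w" using card_mono[OF A_fin[OF ip] sub] A_card[OF ip] by simp
      finally have "card ?U + clique_width w \<le> w" using clq[OF N] by simp
      then show "0 \<le> gg T N \<and> gg T N \<le> w - clique_width w" unfolding gg_def by simp
    qed
  qed
  then show ?thesis by simp
qed

lemma post_card:
  assumes T: "T \<subseteq> P" and M: "M \<in> L" and cap: "captured T M"
    and S: "S \<inter> up_set P le T = {}"
  shows "card {N\<in>L. class_less le R M N \<and> (\<exists>a\<in>S. a \<in> fst N)} \<le> w - clique_width w"
proof (cases "{N\<in>L. class_less le R M N \<and> (\<exists>a\<in>S. a \<in> fst N)} = {}")
  case True show ?thesis unfolding True by simp
next
  case False
  let ?H = "{N\<in>L. class_less le R M N \<and> (\<exists>a\<in>S. a \<in> fst N)}"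
  obtain x0 where x0: "x0 \<in> R M \<inter> fst M" "x0 \<in> up_set P le T" using cap unfolding captured_def by blast
  have topsU: "R M \<inter> snd M \<subseteq> up_set P le T"
  proof
    fix y assume y: "y \<in> R M \<inter> snd M"
    have lt: "lt_of le x0 y" using clq[OF M] x0 y by blast
    obtain t where t: "t \<in> T" "le t x0" "x0 \<in> P" using x0 unfolding up_set_def by blast
    have yP: "y \<in> P" using y L_P[OF M] by blast
    have "le t y" using trans[of t x0 y] t yP T lt unfolding lt_of_def by blast
    then show "y \<in> up_set P le T" using yP t unfolding up_set_def by blast
  qed
  have isM: "sN M \<in> {1..k}" using L_node[OF M] good_idx by blast
  have hM: "clique_width w \<le> hh T M"
  proof -
    have "R M \<inter> snd M \<subseteq> up_set P le T \<inter> A (sN M)" using topsU L_sub[OF M] by blast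
    then have "card (R M \<inter> snd M) \<le> hh T M" unfolding hh_def
      by (intro card_mono) (use A_fin[OF isM] in auto)
    then show ?thesis using clq[OF M] by simp
  qed
  have "card ?H + clique_width w \<le> (w - 1) + 1"
  proof (rule sweep[OF T _ False])
    show "?H \<subseteq> L" by blast
    show "\<forall>N\<in>?H. gg T N + 1 \<le> hh T N"
    proof
      fix N assume "N \<in> ?H"
      then obtain a where N: "N \<in> L" and cl: "class_less le R M N" and a: "a \<in> S" "a \<in> fst N" by blast
      obtain y x where y: "y \<in> R M \<inter> snd M" and x: "x \<in> R N \<inter> fst N" and yx: "le y x"
        using cl_link[OF M N cl] by blast
      have yU: "y \<in> up_set P le T" using topsU y by blast
      have xP: "x \<in> P" using x L_P[OF N] by blast
      have "x \<in> up_set P le T" using yU xP yx trans T unfolding up_set_def by blast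
      moreover have "a \<notin> up_set P le T" using S a by blast
      ultimately show "gg T N + 1 \<le> hh T N" unfolding gg_def hh_def
        using grow2[OF conjunct1[OF L_node[OF N]] conjunct2[OF L_node[OF N]] T] x a by blast
    qed
    show "\<forall>N\<in>?H. clique_width w \<le> gg T N \<and> gg T N \<le> w - 1"
    proof
      fix N assume "N \<in> ?H"
      then obtain a where N: "N \<in> L" and cl: "class_less le R M N" and a: "a \<in> S" "a \<in> fst N" by blast
      have "hh T M \<le> gg T N" using mono_gh[OF T M N cl] .
      moreover have "gg T N \<le> w - 1" using gg_bound_out[OF T N a(2)] S a by blast
      ultimately show "clique_width w \<le> gg T N \<and> gg T N \<le> w - 1" using hM by linarith
    qed
  qed
  then show ?thesis using w_pos by linarith
qed

lemma count_half:
  assumes C: "C \<subseteq> edges_of le L" and C': "C' \<subseteq> edges_of le L"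
    and ch: "\<forall>e\<in>C. \<forall>e'\<in>C. edge_le le e e' \<or> edge_le le e' e"
    and cross: "\<forall>e\<in>C. \<forall>f\<in>C'. \<not> le (snd f) (fst e)"
    and M: "M \<in> L" and capM: "captured (snd ` C') M"
    and minM: "\<forall>N\<in>L. (\<exists>e\<in>C. fst e \<in> fst N \<and> snd e \<in> snd N) \<longrightarrow> captured (snd ` C) N \<longrightarrow> rk M \<le> rk N"
  shows "card C \<le> 2 * (w - clique_width w) + 2"
proof -
  let ?T = "snd ` C" and ?T' = "snd ` C'"
  have TP: "?T \<subseteq> P" using C edge_P by blast
  have T'P: "?T' \<subseteq> P" using C' edge_P by blast
  let ?HC = "{N\<in>L. \<exists>e\<in>C. fst e \<in> fst N \<and> snd e \<in> snd N}"
  let ?Unc = "{N\<in>L. (\<exists>b\<in>?T. b \<in> snd N) \<and> \<not> captured ?T N}"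
  let ?Post = "{N\<in>L. class_less le R M N \<and> (\<exists>a\<in>fst ` C. a \<in> fst N)}"
  have S: "fst ` C \<inter> up_set P le ?T' = {}"
  proof (rule ccontr)
    assume "fst ` C \<inter> up_set P le ?T' \<noteq> {}"
    then obtain e f where "e \<in> C" "f \<in> C'" "le (snd f) (fst e)" unfolding up_set_def by blast
    then show False using cross by blast
  qed
  have sub: "?HC \<subseteq> ?Unc \<union> {M} \<union> ?Post"
  proof
    fix N assume "N \<in> ?HC"
    then obtain e where N: "N \<in> L" and e: "e \<in> C" "fst e \<in> fst N" "snd e \<in> snd N" by blast
    show "N \<in> ?Unc \<union> {M} \<union> ?Post"
    proof (cases "captured ?T N")
      case False
      then show ?thesis using N e by blast
    next
      case True
      then have "rk M \<le> rk N" using minM N e by blast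
      then consider "rk M = rk N" | "rk M < rk N" by linarith
      then show ?thesis
      proof cases
        case 1 then show ?thesis using rk_inj[OF M N] by blast
      next
        case 2 then show ?thesis using rk_less_cl[OF M N] N e by blast
      qed
    qed
  qed
  have fU: "finite ?Unc" and fP: "finite ?Post" using L_fin by auto
  have "card C \<le> card ?HC" using host_card[OF C ch] .
  also have "\<dots> \<le> card (?Unc \<union> {M} \<union> ?Post)"
  proof (rule card_mono[OF _ sub])
    show "finite (?Unc \<union> {M} \<union> ?Post)" using fU fP by blast
  qed
  also have "\<dots> \<le> card (?Unc \<union> {M}) + card ?Post" by (rule card_Un_le)
  also have "\<dots> \<le> card ?Unc + card {M} + card ?Post" using card_Un_le[of ?Unc "{M}"] by linarith
  also have "\<dots> \<le> (w - clique_width w + 1) + 1 + (w - clique_width w)"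
    using unc_card[OF TP] post_card[OF T'P M capM S] by simp
  finally show ?thesis by linarith
qed

lemma mm_part: "mm_free (edges_of le L) (edge_le le) (2 * w + 3 - 2 * clique_width w)"
  unfolding mm_free_def
proof
  let ?c = "clique_width w"
  assume "\<exists>C1 C2. C1 \<subseteq> edges_of le L \<and> C2 \<subseteq> edges_of le L \<and> finite C1 \<and> finite C2
      \<and> card C1 = 2 * w + 3 - 2 * ?c \<and> card C2 = 2 * w + 3 - 2 * ?c \<and> C1 \<inter> C2 = {}
      \<and> (\<forall>x\<in>C1. \<forall>y\<in>C1. edge_le le x y \<or> edge_le le y x)
      \<and> (\<forall>x\<in>C2. \<forall>y\<in>C2. edge_le le x y \<or> edge_le le y x)
      \<and> (\<forall>x\<in>C1. \<forall>y\<in>C2. \<not> edge_le le x y \<and> \<not> edge_le le y x)"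
  then obtain C1 C2 where C1: "C1 \<subseteq> edges_of le L" and C2: "C2 \<subseteq> edges_of le L"
    and c1: "card C1 = 2 * w + 3 - 2 * ?c" and c2: "card C2 = 2 * w + 3 - 2 * ?c"
    and ch1: "\<forall>x\<in>C1. \<forall>y\<in>C1. edge_le le x y \<or> edge_le le y x"
    and ch2: "\<forall>x\<in>C2. \<forall>y\<in>C2. edge_le le x y \<or> edge_le le y x"
    and cr: "\<forall>x\<in>C1. \<forall>y\<in>C2. \<not> edge_le le x y \<and> \<not> edge_le le y x"
    by blast
  have cr12: "\<forall>e\<in>C1. \<forall>f\<in>C2. \<not> le (snd f) (fst e)" using cr unfolding edge_le_def by blast
  have cr21: "\<forall>e\<in>C2. \<forall>f\<in>C1. \<not> le (snd f) (fst e)" using cr unfolding edge_le_def by blast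
  have cw: "?c \<le> w" using c_le .
  have m1: "card C1 = 2 * (w - ?c) + 3" using c1 cw by simp
  have m2: "card C2 = 2 * (w - ?c) + 3" using c2 cw by simp
  let ?T1 = "snd ` C1" and ?T2 = "snd ` C2"
  have T1P: "?T1 \<subseteq> P" using C1 edge_P by blast
  have T2P: "?T2 \<subseteq> P" using C2 edge_P by blast
  let ?S1 = "{N\<in>L. (\<exists>e\<in>C1. fst e \<in> fst N \<and> snd e \<in> snd N) \<and> captured ?T1 N}"
  let ?S2 = "{N\<in>L. (\<exists>e\<in>C2. fst e \<in> fst N \<and> snd e \<in> snd N) \<and> captured ?T2 N}"
  have noS1: "?S1 \<noteq> {}"
  proof
    assume e: "?S1 = {}"
    let ?HH = "{N\<in>L. \<exists>e\<in>C1. fst e \<in> fst N \<and> snd e \<in> snd N}"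
    let ?UU = "{N\<in>L. (\<exists>b\<in>?T1. b \<in> snd N) \<and> \<not> captured ?T1 N}"
    have sub: "?HH \<subseteq> ?UU"
    proof
      fix N assume N: "N \<in> ?HH"
      then obtain e where Ne: "N \<in> L" "e \<in> C1" "fst e \<in> fst N" "snd e \<in> snd N" by blast
      have nc: "\<not> captured ?T1 N"
      proof
        assume "captured ?T1 N"
        then have "N \<in> ?S1" using Ne by blast
        then show False using e by simp
      qed
      have "\<exists>b\<in>?T1. b \<in> snd N" using Ne by blast
      then show "N \<in> ?UU" using nc Ne(1) by blast
    qed
    have fin: "finite ?UU" by (rule finite_subset[OF _ L_fin]) blast
    have "card ?HH \<le> card ?UU" using card_mono[OF fin sub] .
    then have "card ?HH \<le> w - ?c + 1" using unc_card[OF T1P] by linarith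
    then have "card C1 \<le> w - ?c + 1" using host_card[OF C1 ch1] by linarith
    then show False using m1 by linarith
  qed
  have noS2: "?S2 \<noteq> {}"
  proof
    assume e: "?S2 = {}"
    let ?HH = "{N\<in>L. \<exists>e\<in>C2. fst e \<in> fst N \<and> snd e \<in> snd N}"
    let ?UU = "{N\<in>L. (\<exists>b\<in>?T2. b \<in> snd N) \<and> \<not> captured ?T2 N}"
    have sub: "?HH \<subseteq> ?UU"
    proof
      fix N assume N: "N \<in> ?HH"
      then obtain e where Ne: "N \<in> L" "e \<in> C2" "fst e \<in> fst N" "snd e \<in> snd N" by blast
      have nc: "\<not> captured ?T2 N"
      proof
        assume "captured ?T2 N"
        then have "N \<in> ?S2" using Ne by blast
        then show False using e by simp
      qed
      have "\<exists>b\<in>?T2. b \<in> snd N" using Ne by blast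
      then show "N \<in> ?UU" using nc Ne(1) by blast
    qed
    have fin: "finite ?UU" by (rule finite_subset[OF _ L_fin]) blast
    have "card ?HH \<le> card ?UU" using card_mono[OF fin sub] .
    then have "card ?HH \<le> w - ?c + 1" using unc_card[OF T2P] by linarith
    then have "card C2 \<le> w - ?c + 1" using host_card[OF C2 ch2] by linarith
    then show False using m2 by linarith
  qed
  obtain N1 where "N1 \<in> ?S1" using noS1 by blast
  then obtain M1 where M1: "M1 \<in> ?S1" and min1: "\<forall>N. N \<in> ?S1 \<longrightarrow> rk M1 \<le> rk N"
    using ex_has_least_nat[of "\<lambda>N. N \<in> ?S1" N1 rk] by blast
  obtain N2 where "N2 \<in> ?S2" using noS2 by blast
  then obtain M2 where M2: "M2 \<in> ?S2" and min2: "\<forall>N. N \<in> ?S2 \<longrightarrow> rk M2 \<le> rk N"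
    using ex_has_least_nat[of "\<lambda>N. N \<in> ?S2" N2 rk] by blast
  show False
  proof (cases "rk M2 \<le> rk M1")
    case True
    have "card C1 \<le> 2 * (w - ?c) + 2"
    proof (rule count_half[OF C1 C2 ch1 cr12])
      show "M2 \<in> L" "captured ?T2 M2" using M2 by blast+
      show "\<forall>N\<in>L. (\<exists>e\<in>C1. fst e \<in> fst N \<and> snd e \<in> snd N) \<longrightarrow> captured ?T1 N \<longrightarrow> rk M2 \<le> rk N"
      proof (intro ballI impI)
        fix N assume "N \<in> L" "\<exists>e\<in>C1. fst e \<in> fst N \<and> snd e \<in> snd N" "captured ?T1 N"
        then have "N \<in> ?S1" by blast
        then show "rk M2 \<le> rk N" using min1 True le_trans by blast
      qed
    qed
    then show False using m1 by linarith
  next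
    case False
    have "card C2 \<le> 2 * (w - ?c) + 2"
    proof (rule count_half[OF C2 C1 ch2 cr21])
      show "M1 \<in> L" "captured ?T1 M1" using M1 by blast+
      show "\<forall>N\<in>L. (\<exists>e\<in>C2. fst e \<in> fst N \<and> snd e \<in> snd N) \<longrightarrow> captured ?T2 N \<longrightarrow> rk M1 \<le> rk N"
      proof (intro ballI impI)
        fix N assume "N \<in> L" "\<exists>e\<in>C2. fst e \<in> fst N \<and> snd e \<in> snd N" "captured ?T2 N"
        then have "N \<in> ?S2" by blast
        then have "rk M2 \<le> rk N" using min2 by blast
        then show "rk M1 \<le> rk N" using False by linarith
      qed
    qed
    then show False using m2 by linarith
  qed
qed

end

theorem lemma14:
  fixes P :: "'a set" and le :: "'a \<Rightarrow> 'a \<Rightarrow> bool" and A :: "nat \<Rightarrow> 'a set" and k w :: nat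
    and us :: "nat \<times> enat" and R :: "'a set \<times> 'a set \<Rightarrow> 'a set" and L :: "('a set \<times> 'a set) set"
  assumes reg: "regular_poset P le A k"
    and w: "w = width_of P le"
    and R: "\<forall>N. active P le A k N \<longrightarrow> dilworth_clique le N (clique_width w) (R N)"
    and L: "chain_of (active_class P le A k us) (class_less le R) L"
  shows "width_of (edges_of le L) (edge_le le) \<le> w ^ 3
       \<and> mm_free (edges_of le L) (edge_le le) (2 * w + 3 - 2 * clique_width w)"
proof -
  have "rpL P le A k w R L us" unfolding rpL_def rpL_axioms_def rposet_def using reg w R L by blast
  then interpret rpL P le A k w R L us .
  show ?thesis using width_part mm_part by blast
qed



end
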